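(* Let $G$, $k\ge 3$, the choice strings $c_{i,j}$, the template string $t$, $L$ and $d$ be as in the binary construction in the context, and let $s\in\{0,1\}^L$ be a solution, i.e. $t$ and every choice string $c_{i,j}$ ($1\le i<j\le k$) have a substring of length $L$ at Hamming distance at most $d$ from $s$. Then the encoding part of $s$ contains exactly $k$ symbols $1$, and these correspond to a clique of size $k$ in $G$: for $p=1,\dots,k$ the $p$-th section of the encoding part of $s$ equals $\mathrm{number}(h_p)$ for some $h_p$, and $v_{h_1},\dots,v_{h_k}$ form a clique of size $k$ in $G$.
   Context: Let $G=(V,E)$ be an undirected simple graph with $V=\{v_1,\dots,v_n\}$ and edge set $E=\{e_1,\dots,e_m\}$, and let $k\ge 3$ be an integer; put $N=\binom{k}{2}$ and $b=nk-2k+2$. All strings are over $\{0,1\}$. For $1\le p\le n$ let $\mathrm{number}(p)=0^{p-1}10^{n-p}$. Let $\mathrm{front\_tag}=(1^{3nk}0)^{nk}$ (length $(3nk+1)nk$). Order the pairs $(i,j)$, $1\le i<j\le k$, lexicographically and let $i'$ be the position of $(i,j)$ in this order. For an edge $e$ joining $v_r,v_s$ with $r<s$ let $\mathrm{encode}(i,j,e)=(0^n)^{i-1}\,\mathrm{number}(r)\,(0^n)^{j-i-1}\,\mathrm{number}(s)\,(0^n)^{k-j}$, $\mathrm{back\_tag}(i')=0^{(i'-1)b}1^{b}0^{(N-i')b}$, and $\mathrm{block}(i,j,e)=\mathrm{front\_tag}\,\mathrm{encode}(i,j,e)\,\mathrm{back\_tag}(i')$. The choice string is $c_{i,j}=\mathrm{block}(i,j,e_1)\cdots\mathrm{block}(i,j,e_m)$.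 The template string is $t=\mathrm{front\_tag}\,1^{nk}\,0^{Nb}$. Set $L=(3nk+1)nk+nk+Nb$ and $d=nk-k$. For a string $s$ of length $L$, its encoding part is the substring of its positions $(3nk+1)nk+1,\dots,(3nk+1)nk+nk$, divided into $k$ consecutive sections of length $n$. *)

theory Defs
  imports Main
begin

text \<open>Binary strings are bool lists (True = symbol 1, False = symbol 0).
  Vertices are numbered 1..n; a graph is given by the list of its edges
  e_1,...,e_m, each edge stored as a pair (r,s) with r < s.\<close>

definition zeros :: "nat \<Rightarrow> bool list" where
  "zeros l = replicate l False"

definition ones :: "nat \<Rightarrow> bool list" where
  "ones l = replicate l True"

definition number :: "nat \<Rightarrow> nat \<Rightarrow> bool list" where
  "number n p = zeros (p - 1) @ [True] @ zeros (n - p)"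

definition front_tag :: "nat \<Rightarrow> nat \<Rightarrow> bool list" where
  "front_tag n k = concat (replicate (n * k) (ones (3 * n * k) @ [False]))"

definition NN :: "nat \<Rightarrow> nat" where
  "NN k = k choose 2"

definition bb :: "nat \<Rightarrow> nat \<Rightarrow> nat" where
  "bb n k = n * k - 2 * k + 2"

definition pair_index :: "nat \<Rightarrow> nat \<Rightarrow> nat \<Rightarrow> nat" where
  "pair_index k i j =
     card {(a, b). 1 \<le> a \<and> a < b \<and> b \<le> k \<and> (a < i \<or> (a = i \<and> b < j))} + 1"

definition encode :: "nat \<Rightarrow> nat \<Rightarrow> nat \<Rightarrow> nat \<Rightarrow> nat \<times> nat \<Rightarrow> bool list" where
  "encode n k i j e = (case e of (r, s) \<Rightarrow>
     concat (replicate (i - 1) (zeros n)) @ number n r @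
     concat (replicate (j - i - 1) (zeros n)) @ number n s @
     concat (replicate (k - j) (zeros n)))"

definition back_tag :: "nat \<Rightarrow> nat \<Rightarrow> nat \<Rightarrow> bool list" where
  "back_tag n k i' = zeros ((i' - 1) * bb n k) @ ones (bb n k) @ zeros ((NN k - i') * bb n k)"

definition block :: "nat \<Rightarrow> nat \<Rightarrow> nat \<Rightarrow> nat \<Rightarrow> nat \<times> nat \<Rightarrow> bool list" where
  "block n k i j e = front_tag n k @ encode n k i j e @ back_tag n k (pair_index k i j)"

definition choice_string :: "nat \<Rightarrow> nat \<Rightarrow> (nat \<times> nat) list \<Rightarrow> nat \<Rightarrow> nat \<Rightarrow> bool list" where
  "choice_string n k es i j = concat (map (block n k i j) es)"

definition template :: "nat \<Rightarrow> nat \<Rightarrow> bool list" where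
  "template n k = front_tag n k @ ones (n * k) @ zeros (NN k * bb n k)"

definition LL :: "nat \<Rightarrow> nat \<Rightarrow> nat" where
  "LL n k = (3 * n * k + 1) * n * k + n * k + NN k * bb n k"

definition dd :: "nat \<Rightarrow> nat \<Rightarrow> nat" where
  "dd n k = n * k - k"

definition hamming :: "bool list \<Rightarrow> bool list \<Rightarrow> nat" where
  "hamming u v = length (filter (\<lambda>(x, y). x \<noteq> y) (zip u v))"

definition close_substring :: "nat \<Rightarrow> bool list \<Rightarrow> bool list \<Rightarrow> bool" where
  "close_substring d s c = (\<exists>u w v. c = u @ w @ v \<and> length w = length s \<and> hamming w s \<le> d)"

definition is_solution :: "nat \<Rightarrow> nat \<Rightarrow> (nat \<times> nat) list \<Rightarrow> bool list \<Rightarrow> bool" where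
  "is_solution n k es s \<longleftrightarrow> length s = LL n k \<and>
     close_substring (dd n k) s (template n k) \<and>
     (\<forall>i j. 1 \<le> i \<and> i < j \<and> j \<le> k \<longrightarrow> close_substring (dd n k) s (choice_string n k es i j))"

definition encoding_part :: "nat \<Rightarrow> nat \<Rightarrow> bool list \<Rightarrow> bool list" where
  "encoding_part n k s = take (n * k) (drop ((3 * n * k + 1) * n * k) s)"

definition enc_section :: "nat \<Rightarrow> nat \<Rightarrow> bool list \<Rightarrow> bool list" where
  "enc_section n p x = take n (drop ((p - 1) * n) x)"

definition simple_graph :: "nat \<Rightarrow> (nat \<times> nat) list \<Rightarrow> bool" where
  "simple_graph n es \<longleftrightarrow> distinct es \<and> (\<forall>(r, s) \<in> set es. 1 \<le> r \<and> r < s \<and> s \<le> n)"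

definition adjacent :: "(nat \<times> nat) list \<Rightarrow> nat \<Rightarrow> nat \<Rightarrow> bool" where
  "adjacent es u v \<longleftrightarrow> (u, v) \<in> set es \<or> (v, u) \<in> set es"

end

theory Submission
  imports Defs
begin


lemma length_concat_replicate: "length (concat (replicate M x)) = M * length x"
  by (induction M) auto

lemma concat_replicate_nth:
  "p < M * length x \<Longrightarrow> concat (replicate M x) ! p = x ! (p mod length x)"
proof (induction M arbitrary: p)
  case 0 then show ?case by simp
next
  case (Suc M)
  show ?case
  proof (cases "p < length x")
    case True then show ?thesis by (simp add: nth_append)
  next
    case False
    then have "p - length x < M * length x" using Suc.prems by auto
    then show ?thesis using False Suc.IH[of "p - length x"]
      by (simp add: nth_append le_mod_geq)
  qed
qed

lemma concat_replicate_replicate: "concat (replicate a (replicate n x)) = replicate (a*n) x"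
  by (induction a) (auto simp: replicate_add)

definition ftb :: "nat \<Rightarrow> nat \<Rightarrow> bool" where
  "ftb K q = (q mod (3*K+1) \<noteq> 3*K)"

lemma length_front_tag: "length (front_tag n k) = (3*(n*k)+1)*(n*k)"
  by (simp add: front_tag_def length_concat_replicate ones_def)

lemma front_tag_nth: "p < (3*(n*k)+1)*(n*k) \<Longrightarrow> front_tag n k ! p = ftb (n*k) p"
proof -
  assume a: "p < (3*(n*k)+1)*(n*k)"
  have "front_tag n k ! p = (ones (3*n*k) @ [False]) ! (p mod (3*(n*k)+1))"
    unfolding front_tag_def using a
    by (subst concat_replicate_nth) (auto simp: ones_def algebra_simps)
  also have "\<dots> = ftb (n*k) p"
  proof -
    have h: "p mod Suc (3*(n*k)) \<le> 3*(n*k)" using less_Suc_eq_le mod_less_divisor by blast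
    show ?thesis
      apply (simp add: ones_def ftb_def nth_append mult.assoc)
      using h by linarith
  qed
  finally show ?thesis .
qed

lemma rep_tt_nth:
  "(replicate a False @ [True] @ replicate b False @ [True] @ replicate c False) =
   map (\<lambda>q. q = a \<or> q = a + b + 1) [0..<a+b+c+2]"
  by (rule nth_equalityI) (auto simp: nth_append nth_Cons')

lemma rep_run_nth:
  "(replicate a False @ replicate b True @ replicate c False) =
   map (\<lambda>q. a \<le> q \<and> q < a + b) [0..<a+b+c]"
  by (rule nth_equalityI) (auto simp: nth_append)

lemma encode_eq:
  assumes "1 \<le> i" "i < j" "j \<le> k" "1 \<le> r" "r \<le> n" "1 \<le> s" "s \<le> n"
  shows "encode n k i j (r,s) = map (\<lambda>q. q = (i-1)*n + (r-1) \<or> q = (j-1)*n + (s-1)) [0..<n*k]"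
proof -
  have e1: "encode n k i j (r,s) = (replicate ((i-1)*n) False @ replicate (r-1) False) @ [True] @
      (replicate (n-r) False @ replicate ((j-i-1)*n) False @ replicate (s-1) False) @ [True] @
      (replicate (n-s) False @ replicate ((k-j)*n) False)"
    unfolding encode_def number_def zeros_def concat_replicate_replicate by simp
  also have "\<dots> = replicate ((i-1)*n + (r-1)) False @ [True] @
      replicate ((n-r) + (j-i-1)*n + (s-1)) False @ [True] @ replicate ((n-s) + (k-j)*n) False"
    by (simp only: replicate_add append_assoc)
  also have "\<dots> = map (\<lambda>q. q = (i-1)*n + (r-1) \<or> q = (i-1)*n + (r-1) + ((n-r) + (j-i-1)*n + (s-1)) + 1)
      [0..<(i-1)*n + (r-1) + ((n-r) + (j-i-1)*n + (s-1)) + ((n-s) + (k-j)*n) + 2]"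
    by (rule rep_tt_nth)
  also have "(i-1)*n + (r-1) + ((n-r) + (j-i-1)*n + (s-1)) + 1 = (j-1)*n + (s-1)"
  proof -
    have "(j-1)*n = (i-1)*n + n + (j-i-1)*n"
    proof -
      have "j - 1 = (i-1) + 1 + (j-i-1)" using assms by linarith
      then show ?thesis by (metis add_mult_distrib mult_1)
    qed
    then show ?thesis using assms by linarith
  qed
  also have "(i-1)*n + (r-1) + ((n-r) + (j-i-1)*n + (s-1)) + ((n-s) + (k-j)*n) + 2 = n*k"
  proof -
    have "k = (i-1) + 1 + (j-i-1) + 1 + (k-j)" using assms by linarith
    then have "n*k = (i-1)*n + n + (j-i-1)*n + n + (k-j)*n"
      by (metis add_mult_distrib mult_1 mult.commute)
    then show ?thesis using assms by linarith
  qed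
  finally show ?thesis .
qed

definition ftb_back :: "nat \<Rightarrow> nat \<Rightarrow> nat \<Rightarrow> bool" where
  "ftb_back b i' y = ((i'-1)*b \<le> y \<and> y < i'*b)"

lemma back_tag_eq:
  assumes "1 \<le> i'" "i' \<le> NN k"
  shows "back_tag n k i' = map (ftb_back (bb n k) i') [0..<NN k * bb n k]"
proof -
  have "back_tag n k i' = map (\<lambda>q. (i'-1)*bb n k \<le> q \<and> q < (i'-1)*bb n k + bb n k)
      [0..<(i'-1)*bb n k + bb n k + (NN k - i') * bb n k]"
    unfolding back_tag_def zeros_def ones_def by (rule rep_run_nth)
  also have "(i'-1)*bb n k + bb n k = i' * bb n k" using assms by (cases i') auto
  also have "i' * bb n k + (NN k - i') * bb n k = NN k * bb n k" using assms
    by (metis add_mult_distrib le_add_diff_inverse)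
  finally show ?thesis by (simp add: ftb_back_def)
qed

definition AP :: "nat \<Rightarrow> (nat \<times> nat) set" where
  "AP k = {(a, b). 1 \<le> a \<and> a < b \<and> b \<le> k}"

lemma AP_finite: "finite (AP k)"
  by (rule finite_subset[of _ "{1..k} \<times> {1..k}"]) (auto simp: AP_def)

lemma AP_card: "card (AP k) = NN k"
proof (induction k)
  case 0
  have "AP 0 = {}" by (auto simp: AP_def)
  then show ?case by (simp add: NN_def)
next
  case (Suc k)
  have eq: "AP (Suc k) = AP k \<union> (\<lambda>a. (a, Suc k)) ` {1..k}"
    by (auto simp: AP_def)
  have "card (AP (Suc k)) = card (AP k) + card ((\<lambda>a. (a, Suc k)) ` {1..k})"
    unfolding eq by (rule card_Un_disjoint) (use AP_finite in \<open>auto simp: AP_def\<close>)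
  also have "card ((\<lambda>a. (a, Suc k)) ` {1..k}) = k"
    by (subst card_image) (auto simp: inj_on_def)
  finally show ?case using Suc.IH by (simp add: NN_def numeral_2_eq_2)
qed

lemma pair_index_bounds:
  assumes "1 \<le> i" "i < j" "j \<le> k"
  shows "1 \<le> pair_index k i j \<and> pair_index k i j \<le> NN k"
proof -
  have sub: "{(a, b). 1 \<le> a \<and> a < b \<and> b \<le> k \<and> (a < i \<or> (a = i \<and> b < j))} \<subseteq> AP k - {(i,j)}"
    by (auto simp: AP_def)
  have "(i,j) \<in> AP k" using assms by (auto simp: AP_def)
  then have "card (AP k - {(i,j)}) = NN k - 1" using AP_card AP_finite by simp
  moreover have "NN k \<ge> 1" using \<open>(i,j) \<in> AP k\<close> AP_card AP_finite
    by (metis card_0_eq empty_iff less_one not_le)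
  ultimately show ?thesis using card_mono[OF _ sub] AP_finite unfolding pair_index_def
    by (metis (no_types, lifting) add_le_cancel_right diff_add finite_Diff le_add2 le_diff_conv)
qed

lemma pair_index_12: "pair_index k 1 2 = 1"
proof -
  have "pair_index k 1 2 = card ({}::(nat\<times>nat) set) + 1"
    unfolding pair_index_def by (rule arg_cong[where f="\<lambda>A. card A + 1"]) auto
  then show ?thesis by simp
qed

lemma pair_index_13: "k \<ge> 3 \<Longrightarrow> pair_index k 1 3 = 2"
proof -
  assume "k \<ge> 3"
  then have "pair_index k 1 3 = card {(1::nat,2::nat)} + 1"
    unfolding pair_index_def by (intro arg_cong[where f="\<lambda>A. card A + 1"]) auto
  then show ?thesis by simp
qed

definition tb :: "nat \<Rightarrow> nat \<Rightarrow> bool" where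
  "tb K p = (if p < (3*K+1)*K then ftb K p else p < (3*K+1)*K + K)"

definition blkb :: "nat \<Rightarrow> nat \<Rightarrow> nat \<Rightarrow> nat \<Rightarrow> nat \<Rightarrow> nat \<Rightarrow> bool" where
  "blkb K A1 A2 b i' p = (if p < (3*K+1)*K then ftb K p
     else if p < (3*K+1)*K + K then (p - (3*K+1)*K = A1 \<or> p - (3*K+1)*K = A2)
     else ftb_back b i' (p - (3*K+1)*K - K))"

lemma LL_eq: "LL n k = (3*(n*k)+1)*(n*k) + n*k + NN k * bb n k"
  by (simp add: LL_def algebra_simps)

lemma template_len: "length (template n k) = LL n k"
  by (simp add: template_def length_front_tag LL_eq ones_def zeros_def)

lemma template_nth: "p < LL n k \<Longrightarrow> template n k ! p = tb (n*k) p"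
proof -
  assume p: "p < LL n k"
  define K where "K = n*k"
  define F where "F = (3*K+1)*K"
  have lf: "length (front_tag n k) = F" by (simp add: F_def K_def length_front_tag)
  have fn: "\<And>q. q < F \<Longrightarrow> front_tag n k ! q = ftb K q" by (simp add: F_def K_def front_tag_nth)
  have tbe: "tb K p = (if p < F then ftb K p else p < F + K)" by (simp add: tb_def F_def)
  have "p < F + K + NN k * bb n k" using p by (simp add: LL_eq F_def K_def)
  then show ?thesis unfolding K_def[symmetric] tbe template_def
    by (auto simp: nth_append lf fn ones_def zeros_def K_def)
qed

lemma block_len_nth:
  assumes "1 \<le> i" "i < j" "j \<le> k" "1 \<le> r" "r \<le> n" "1 \<le> s" "s \<le> n"
  shows "length (block n k i j (r,s)) = LL n k \<and>
    (\<forall>p < LL n k. block n k i j (r,s) ! p =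
        blkb (n*k) ((i-1)*n + (r-1)) ((j-1)*n + (s-1)) (bb n k) (pair_index k i j) p)"
proof -
  have pb: "1 \<le> pair_index k i j" "pair_index k i j \<le> NN k"
    using pair_index_bounds[OF assms(1-3)] by auto
  note e = encode_eq[OF assms] back_tag_eq[OF pb]
  define K where "K = n*k"
  define F where "F = (3*K+1)*K"
  have lf: "length (front_tag n k) = F" by (simp add: F_def K_def length_front_tag)
  have fn: "\<And>q. q < F \<Longrightarrow> front_tag n k ! q = ftb K q" by (simp add: F_def K_def front_tag_nth)
  have be: "\<And>p. blkb K ((i-1)*n + (r-1)) ((j-1)*n + (s-1)) (bb n k) (pair_index k i j) p =
     (if p < F then ftb K p
     else if p < F + K then (p - F = (i-1)*n + (r-1) \<or> p - F = (j-1)*n + (s-1))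
     else ftb_back (bb n k) (pair_index k i j) (p - F - K))" by (simp add: blkb_def F_def)
  have LLe: "LL n k = F + K + NN k * bb n k" by (simp add: LL_eq F_def K_def)
  show ?thesis unfolding K_def[symmetric] be LLe
    by (auto simp: block_def e nth_append lf fn K_def)
qed

lemma concat_map_nth:
  assumes "\<forall>y \<in> set xs. length (f y) = L" "x < length xs * L"
  shows "concat (map f xs) ! x = f (xs ! (x div L)) ! (x mod L)"
  using assms
proof (induction xs arbitrary: x)
  case Nil then show ?case by simp
next
  case (Cons a xs)
  have la: "length (f a) = L" using Cons.prems by simp
  show ?case
  proof (cases "x < L")
    case True then show ?thesis using la by (simp add: nth_append)
  next
    case False
    then have "x - L < length xs * L" using Cons.prems by auto
    then have "concat (map f xs) ! (x - L) = f (xs ! ((x - L) div L)) ! ((x - L) mod L)"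
      using Cons by auto
    moreover have "L > 0" using False Cons.prems by auto
    moreover have "(x - L) div L = x div L - 1" "(x-L) mod L = x mod L"
      using False \<open>L > 0\<close> by (auto simp: le_div_geq le_mod_geq)
    moreover have "x div L \<ge> 1" using False \<open>L > 0\<close> by (simp add: le_div_geq)
    ultimately show ?thesis using la False
      by (simp add: nth_append nth_Cons')
  qed
qed

lemma concat_map_len:
  "\<forall>y \<in> set xs. length (f y) = L \<Longrightarrow> length (concat (map f xs)) = length xs * L"
  by (induction xs) auto

lemma hamming_card:
  "length u = length v \<Longrightarrow> hamming u v = card {p. p < length u \<and> u!p \<noteq> v!p}"
  unfolding hamming_def length_filter_conv_card
  by (intro arg_cong[where f=card]) auto




lemma lt_F: "q < K \<Longrightarrow> c < (P::nat) \<Longrightarrow> q*P + c < P*K"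
proof -
  assume "q < K" "c < P"
  then have "q*P + c < (q+1)*P" by simp
  also have "\<dots> \<le> K*P" using \<open>q < K\<close> by (intro mult_le_mono1) simp
  finally show ?thesis by (simp add: mult.commute)
qed

lemma modP: "c < P \<Longrightarrow> (q*P + c) mod (P::nat) = c" by simp

lemma inj_lin: "0 < (P::nat) \<Longrightarrow> inj_on (\<lambda>q. q*P + c) A"
  by (auto simp: inj_on_def)

context
  fixes K k b N L \<delta> P :: nat and w :: "nat \<Rightarrow> bool" and Aa Ab Ba Bb i' :: nat
  assumes hK: "2*k \<le> K" "3 \<le> k" "3 \<le> N"
    and hP: "P = 3*K+1"
    and hb: "b = K - 2*k + 2"
    and hL: "L = P*K + K + N*b"
    and hd: "0 < \<delta>" "\<delta> < L"
    and hw: "\<And>p. p < L \<Longrightarrow> w p = (if \<delta> + p < L then blkb K Aa Ab b i' (\<delta>+p)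
                                    else blkb K Ba Bb b i' (\<delta>+p-L))"
begin

lemma ftbP: "ftb K x = (x mod P \<noteq> 3*K)" by (simp add: ftb_def hP)

lemma ftb_at: "c < P \<Longrightarrow> ftb K (q*P + c) = (c \<noteq> 3*K)"
  unfolding ftbP by simp

lemma blkb_lt: "q < P*K \<Longrightarrow> blkb K X1 X2 b i' q = ftb K q"
  by (simp add: blkb_def hP)

lemma blkb_mid: "P*K \<le> q \<Longrightarrow> q < P*K + K \<Longrightarrow> blkb K X1 X2 b i' q = (q - P*K = X1 \<or> q - P*K = X2)"
  by (simp add: blkb_def hP)

lemma blkb_hi: "P*K + K \<le> q \<Longrightarrow> blkb K X1 X2 b i' q = ftb_back b i' (q - P*K - K)"
  by (simp add: blkb_def hP)

lemma tb_lt: "q < P*K \<Longrightarrow> tb K q = ftb K q"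
  by (simp add: tb_def hP)

lemma tb_ge: "P*K \<le> q \<Longrightarrow> tb K q = (q < P*K + K)"
  by (simp add: tb_def hP)

lemma Ppos: "0 < P" using hP by simp

lemma case1:
  assumes "\<delta> \<le> 3*K"
  shows "2*(K-k) < card {p. p < L \<and> w p \<noteq> tb K p}"
proof -
  define S1 where "S1 = (\<lambda>q. q*P + (3*K - \<delta>)) ` {..<K}"
  define S2 where "S2 = (\<lambda>q. q*P + 3*K) ` {..<K-1}"
  have FL: "P*K \<le> L" using hL by simp
  have s1: "S1 \<subseteq> {p. p < L \<and> w p \<noteq> tb K p}"
  proof
    fix p assume "p \<in> S1"
    then obtain q where q: "q < K" and p: "p = q*P + (3*K - \<delta>)" by (auto simp: S1_def)
    have pF: "p < P*K" using lt_F[OF q, of "3*K-\<delta>" P] p hP by simp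
    have dp: "\<delta> + p = q*P + 3*K" using p assms by simp
    have dpF: "\<delta> + p < P*K" using lt_F[OF q, of "3*K" P] dp hP by simp
    have "w p = ftb K (\<delta> + p)" using hw[of p] pF dpF FL blkb_lt by simp
    also have "\<dots> = False" unfolding dp by (subst ftb_at) (auto simp: hP)
    finally have "\<not> w p" by simp
    moreover have "tb K p" using tb_lt[OF pF] p ftb_at[of "3*K-\<delta>" q] hd hP assms by simp
    ultimately show "p \<in> {p. p < L \<and> w p \<noteq> tb K p}" using pF FL by auto
  qed
  have s2: "S2 \<subseteq> {p. p < L \<and> w p \<noteq> tb K p}"
  proof
    fix p assume "p \<in> S2"
    then obtain q where q: "q < K - 1" and p: "p = q*P + 3*K" by (auto simp: S2_def)
    have q1: "q + 1 < K" using q by simp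
    have pF: "p < P*K" using lt_F[of q K "3*K" P] q p hP by simp
    have dp: "\<delta> + p = (q+1)*P + (\<delta> - 1)" using p assms hd hP by simp
    have dpF: "\<delta> + p < P*K" using lt_F[OF q1, of "\<delta>-1" P] dp assms hP by simp
    have "w p = ftb K (\<delta> + p)" using hw[of p] pF dpF FL blkb_lt by simp
    also have "\<dots> = True" unfolding dp using assms hP hd by (subst ftb_at) auto
    finally have "w p" by simp
    moreover have "\<not> tb K p" using tb_lt[OF pF] p ftb_at[of "3*K" q] hP by simp
    ultimately show "p \<in> {p. p < L \<and> w p \<noteq> tb K p}" using pF FL by auto
  qed
  have disj: "S1 \<inter> S2 = {}"
  proof -
    { fix p assume "p \<in> S1" "p \<in> S2"
      obtain q where p: "p = q*P + (3*K - \<delta>)" using \<open>p \<in> S1\<close> by (auto simp: S1_def)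
      obtain q' where p': "p = q'*P + 3*K" using \<open>p \<in> S2\<close> by (auto simp: S2_def)
      have "p mod P = 3*K - \<delta>" unfolding p by (rule modP) (simp add: hP)
      moreover have "p mod P = 3*K" unfolding p' by (rule modP) (simp add: hP)
      ultimately have False using hd assms by simp }
    then show ?thesis by blast
  qed
  have c1: "card S1 = K" unfolding S1_def by (subst card_image) (auto simp: inj_lin Ppos)
  have c2: "card S2 = K - 1" unfolding S2_def by (subst card_image) (auto simp: inj_lin Ppos)
  have "card (S1 \<union> S2) = 2*K - 1" using c1 c2 disj card_Un_disjoint[of S1 S2] hK
    unfolding S1_def S2_def by simp
  moreover have "card (S1 \<union> S2) \<le> card {p. p < L \<and> w p \<noteq> tb K p}"
    using s1 s2 by (intro card_mono) auto
  ultimately show ?thesis using hK by linarith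
qed

lemma case2:
  assumes "L - \<delta> \<le> 3*K"
  shows "2*(K-k) < card {p. p < L \<and> w p \<noteq> tb K p}"
proof -
  define d' where "d' = L - \<delta>"
  have d'1: "1 \<le> d'" "d' \<le> 3*K" "\<delta> + d' = L" using assms hd by (auto simp: d'_def)
  define S1 where "S1 = (\<lambda>q. q*P + 3*K) ` {..<K}"
  define S2 where "S2 = (\<lambda>q. q*P + (3*K + d')) ` {..<K-1}"
  have FL: "P*K \<le> L" using hL by simp
  have s1: "S1 \<subseteq> {p. p < L \<and> w p \<noteq> tb K p}"
  proof
    fix p assume "p \<in> S1"
    then obtain q where q: "q < K" and p: "p = q*P + 3*K" by (auto simp: S1_def)
    have pF: "p < P*K" using lt_F[OF q, of "3*K" P] p hP by simp
    have dp: "\<delta> + p - L = q*P + (3*K - d')" using p d'1 by simp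
    have dpF: "\<delta> + p - L < P*K" using lt_F[OF q, of "3*K - d'" P] dp hP by simp
    have "w p = ftb K (\<delta> + p - L)" using hw[of p] pF dpF FL blkb_lt d'1 p by simp
    also have "\<dots> = True" unfolding dp using d'1 by (subst ftb_at) (auto simp: hP)
    finally have "w p" by simp
    moreover have "\<not> tb K p" using tb_lt[OF pF] p ftb_at[of "3*K" q] hP by simp
    ultimately show "p \<in> {p. p < L \<and> w p \<noteq> tb K p}" using pF FL by auto
  qed
  have s2: "S2 \<subseteq> {p. p < L \<and> w p \<noteq> tb K p}"
  proof
    fix p assume "p \<in> S2"
    then obtain q where q: "q < K - 1" and p: "p = q*P + (3*K + d')" by (auto simp: S2_def)
    have q1: "q + 1 < K" using q by simp
    have pe: "p = (q+1)*P + (d' - 1)" using p d'1 hP by simp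
    have pF: "p < P*K" using lt_F[OF q1, of "d'-1" P] pe d'1 hP by simp
    have dp: "\<delta> + p - L = q*P + 3*K" using p d'1 by simp
    have dpF: "\<delta> + p - L < P*K" using lt_F[of q K "3*K" P] q dp hP by simp
    have "w p = ftb K (\<delta> + p - L)" using hw[of p] pF dpF FL blkb_lt d'1 p by simp
    also have "\<dots> = False" unfolding dp by (subst ftb_at) (auto simp: hP)
    finally have "\<not> w p" by simp
    moreover have "tb K p" using tb_lt[OF pF] pe ftb_at[of "d'-1" "q+1"] hP d'1 by simp
    ultimately show "p \<in> {p. p < L \<and> w p \<noteq> tb K p}" using pF FL by auto
  qed
  have disj: "S1 \<inter> S2 = {}" using s1 s2
  proof -
    { fix p assume "p \<in> S1" "p \<in> S2"
      obtain q where p: "p = q*P + 3*K" using \<open>p \<in> S1\<close> by (auto simp: S1_def)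
      obtain q' where p': "p = q'*P + (3*K + d')" using \<open>p \<in> S2\<close> by (auto simp: S2_def)
      have "p = (q'+1)*P + (d' - 1)" using p' d'1 hP by simp
      then have "p mod P = d' - 1" by (metis modP d'1(2) hP less_Suc_eq_le diff_le_self le_trans add_diff_cancel_left' Suc_eq_plus1 le_less_trans lessI)
      moreover have "p mod P = 3*K" unfolding p by (rule modP) (simp add: hP)
      ultimately have False using d'1 by simp }
    then show ?thesis by blast
  qed
  have c1: "card S1 = K" unfolding S1_def by (subst card_image) (auto simp: inj_lin Ppos)
  have c2: "card S2 = K - 1" unfolding S2_def by (subst card_image) (auto simp: inj_lin Ppos)
  have "card (S1 \<union> S2) = 2*K - 1" using c1 c2 disj card_Un_disjoint[of S1 S2] hK
    unfolding S1_def S2_def by simp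
  moreover have "card (S1 \<union> S2) \<le> card {p. p < L \<and> w p \<noteq> tb K p}"
    using s1 s2 by (intro card_mono) auto
  ultimately show ?thesis using hK by linarith
qed

lemma case3:
  assumes "3*K < \<delta>" "\<delta> \<le> N*b"
  shows "2*(K-k) < card {p. p < L \<and> w p \<noteq> tb K p}"
proof -
  define S where "S = (\<lambda>x. L - \<delta> + x) ` {..<3*K}"
  have sub: "S \<subseteq> {p. p < L \<and> w p \<noteq> tb K p}"
  proof
    fix p assume "p \<in> S"
    then obtain x where x: "x < 3*K" and p: "p = L - \<delta> + x" by (auto simp: S_def)
    have pL: "p < L" "P*K + K \<le> p" using x p assms hL hd by auto
    have "\<not> tb K p" using tb_ge[of p] pL by simp
    have "3 \<le> P" using hP hK by simp
    then have "3*K \<le> P*K" by (rule mult_le_mono1)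
    then have xF: "x < P*K" using x by linarith
    have "w p = ftb K x" using hw[of p] pL blkb_lt[OF xF] p hd by simp
    also have "\<dots> = True" using ftb_at[of x 0] x hP by simp
    finally show "p \<in> {p. p < L \<and> w p \<noteq> tb K p}" using pL \<open>\<not> tb K p\<close> by auto
  qed
  have "card S = 3*K" unfolding S_def by (subst card_image) (auto simp: inj_on_def)
  moreover have "card S \<le> card {p. p < L \<and> w p \<noteq> tb K p}" using sub by (intro card_mono) auto
  ultimately show ?thesis using hK by linarith
qed

lemma case4:
  assumes "N*b < \<delta>" "3*K < L - \<delta>"
  shows "2*(K-k) < card {p. p < L \<and> w p \<noteq> tb K p}"
proof -
  define d' where "d' = L - \<delta>"
  define m where "m = min (3*K) (K + N*b)"
  define I where "I = {d' - m..<d'}"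
  define Os where "Os = {p \<in> I. w p}"
  define Z where "Z = {p \<in> I. \<not> tb K p}"
  have md: "m \<le> d'" "m \<le> 3*K" "m \<le> K + N*b" using assms by (auto simp: m_def d'_def)
  have d'F: "d' < P*K + K" using assms hL hd by (simp add: d'_def)
  have dd': "\<delta> + d' = L" using hd by (simp add: d'_def)
  have sub: "I - Os - Z \<subseteq> {p. p < L \<and> w p \<noteq> tb K p}"
  proof
    fix p assume "p \<in> I - Os - Z"
    then have "p \<in> I" "p \<notin> Os" "p \<notin> Z" by blast+
    then have "p < d'" "\<not> w p" "tb K p" unfolding I_def Os_def Z_def by simp_all
    then show "p \<in> {p. p < L \<and> w p \<noteq> tb K p}" using dd' by simp
  qed
  have cI: "card I = m" using md by (simp add: I_def)
  have cZ: "card Z \<le> 1"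
  proof -
    have "finite Z" by (simp add: Z_def I_def)
    moreover have "\<forall>p1\<in>Z. \<forall>p2\<in>Z. p1 = p2"
    proof (intro ballI)
      fix p1 p2 assume a: "p1 \<in> Z" "p2 \<in> Z"
      have m1: "p1 < P*K \<and> p1 mod P = 3*K" if "p1 \<in> Z" for p1
      proof -
        have "p1 < d'" "\<not> tb K p1" using that by (auto simp: Z_def I_def)
        then have "p1 < P*K" using tb_ge[of p1] d'F by (cases "P*K \<le> p1") auto
        then show ?thesis using tb_lt \<open>\<not> tb K p1\<close> ftbP by auto
      qed
      have r: "p1 = p2" if "p1 \<in> Z" "p2 \<in> Z" "p1 \<le> p2" for p1 p2
      proof -
        have "P dvd p2 - p1" using m1[OF that(1)] m1[OF that(2)] that(3)
          by (metis mod_eq_dvd_iff_nat)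
        moreover have "p2 - p1 < P" using that md hP by (auto simp: Z_def I_def)
        ultimately have "p2 - p1 = 0" using dvd_imp_le by (metis not_less zero_less_iff_neq_zero)
        then show ?thesis using that(3) by simp
      qed
      show "p1 = p2" using r[OF a] r[OF a(2) a(1)] by linarith
    qed
    ultimately show ?thesis using card_le_Suc0_iff_eq by auto
  qed
  have cO: "card Os \<le> b + 2"
  proof -
    define R where "R = (\<lambda>y. P*K + K + y - \<delta>) ` {(i'-1)*b..<i'*b}"
    have "Os \<subseteq> {P*K + Aa - \<delta>, P*K + Ab - \<delta>} \<union> R"
    proof
      fix p assume "p \<in> Os"
      then have pI: "d' - m \<le> p" "p < d'" "w p" by (auto simp: Os_def I_def)
      have lo: "P*K \<le> \<delta> + p" using pI md dd' hL by linarith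
      have hi: "\<delta> + p < L" using pI dd' by linarith
      have wp: "w p = blkb K Aa Ab b i' (\<delta> + p)" using hw[of p] hi by simp
      show "p \<in> {P*K + Aa - \<delta>, P*K + Ab - \<delta>} \<union> R"
      proof (cases "\<delta> + p < P*K + K")
        case True
        then have "\<delta> + p - P*K = Aa \<or> \<delta> + p - P*K = Ab" using blkb_mid[OF lo True] wp pI by simp
        then show ?thesis using lo by auto
      next
        case False
        then have "ftb_back b i' (\<delta> + p - P*K - K)" using blkb_hi[of "\<delta>+p"] wp pI by simp
        then have "\<delta> + p - P*K - K \<in> {(i'-1)*b..<i'*b}" by (simp add: ftb_back_def)
        moreover have "p = P*K + K + (\<delta> + p - P*K - K) - \<delta>" using False by simp
        ultimately show ?thesis unfolding R_def by blast
      qed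
    qed
    then have "card Os \<le> card ({P*K + Aa - \<delta>, P*K + Ab - \<delta>} \<union> R)"
      by (intro card_mono) (auto simp: R_def)
    also have "\<dots> \<le> card {P*K + Aa - \<delta>, P*K + Ab - \<delta>} + card R" by (rule card_Un_le)
    also have "card {P*K + Aa - \<delta>, P*K + Ab - \<delta>} \<le> 2" by (simp add: card_insert_le_m1)
    also have "card R \<le> b"
    proof -
      have "card R \<le> card {(i'-1)*b..<i'*b}" unfolding R_def by (rule card_image_le) simp
      also have "\<dots> = i'*b - (i'-1)*b" by simp
      also have "\<dots> \<le> b" by (cases i') auto
      finally show ?thesis .
    qed
    finally show ?thesis by simp
  qed
  have "card I - card Os - card Z \<le> card (I - Os - Z)"
  proof -
    have "card I - card Os \<le> card (I - Os)" by (rule diff_card_le_card_Diff) (simp add: Os_def I_def)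
    moreover have "card (I - Os) - card Z \<le> card (I - Os - Z)" by (rule diff_card_le_card_Diff) (simp add: Z_def I_def)
    ultimately show ?thesis by linarith
  qed
  also have "\<dots> \<le> card {p. p < L \<and> w p \<noteq> tb K p}" using sub by (intro card_mono) auto
  finally have main: "m - (b+2) - 1 \<le> card {p. p < L \<and> w p \<noteq> tb K p}" using cI cO cZ by linarith
  have Nb: "3*b \<le> N*b" using hK by (intro mult_le_mono1) simp
  have "2*(K-k) < m - (b+2) - 1"
  proof (cases "3*K \<le> K + N*b")
    case True then have "m = 3*K" by (simp add: m_def)
    then show ?thesis using hK hb by linarith
  next
    case False then have "m = K + N*b" by (simp add: m_def)
    then show ?thesis using hK hb Nb by linarith
  qed
  then show ?thesis using main by linarith
qed

lemma misaligned: "2*(K-k) < card {p. p < L \<and> w p \<noteq> tb K p}"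
proof -
  consider "\<delta> \<le> 3*K" | "L - \<delta> \<le> 3*K" | "3*K < \<delta>" "\<delta> \<le> N*b" | "N*b < \<delta>" "3*K < L - \<delta>"
    by linarith
  then show ?thesis using case1 case2 case3 case4 by cases auto
qed

end



lemma xd_lemma:
  assumes "finite D" "finite X" "card D = 2*d" "card X \<le> d" "card ((D - X) \<union> (X - D)) \<le> d"
  shows "X \<subseteq> D \<and> card X = d"
proof -
  have "card D - card X \<le> card (D - X)" by (rule diff_card_le_card_Diff) (use assms in auto)
  moreover have "card ((D - X) \<union> (X - D)) = card (D - X) + card (X - D)"
    by (rule card_Un_disjoint) (use assms in auto)
  ultimately have "card (X - D) = 0" "card (D - X) \<le> d" using assms by linarith+
  then have "X - D = {}" using assms by simp
  moreover have "card X \<ge> d" using \<open>card (D - X) \<le> d\<close> \<open>card D - card X \<le> card (D - X)\<close> assms by linarith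
  ultimately show ?thesis using assms by auto
qed

lemma aligned_D:
  assumes "P = 3*K+1" "L = P*K + K + N*b" "A1 < K" "A2 < K" "1 \<le> i'" "i' \<le> N"
  shows "{p. p < L \<and> blkb K A1 A2 b i' p \<noteq> tb K p} =
    ({P*K..<P*K+K} - {P*K+A1, P*K+A2}) \<union> {P*K+K+(i'-1)*b..<P*K+K+i'*b}"
proof -
  obtain c where c: "N*b = i'*b + c" using assms by (metis le_iff_add mult_le_mono1)
  have L: "L = P*K + K + i'*b + c" using assms c by simp
  show ?thesis
  proof (rule set_eqI)
    fix p
    consider "p < P*K" | "P*K \<le> p" "p < P*K + K" | "P*K + K \<le> p" by linarith
    then show "p \<in> {p. p < L \<and> blkb K A1 A2 b i' p \<noteq> tb K p} \<longleftrightarrow>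
      p \<in> ({P*K..<P*K+K} - {P*K+A1, P*K+A2}) \<union> {P*K+K+(i'-1)*b..<P*K+K+i'*b}"
    proof cases
      case 1
      have "blkb K A1 A2 b i' p = tb K p" using 1 assms(1) by (simp add: blkb_def tb_def)
      then show ?thesis using 1 by auto
    next
      case 2
      have "blkb K A1 A2 b i' p = (p - P*K = A1 \<or> p - P*K = A2)" "tb K p"
        using 2 assms(1) by (simp_all add: blkb_def tb_def)
      moreover have "p < L" using 2 L by linarith
      ultimately show ?thesis using 2 by auto
    next
      case 3
      have "blkb K A1 A2 b i' p = ftb_back b i' (p - P*K - K)" "\<not> tb K p"
        using 3 assms(1) by (simp_all add: blkb_def tb_def)
      moreover have "ftb_back b i' (p - P*K - K) \<longleftrightarrow> P*K+K+(i'-1)*b \<le> p \<and> p < P*K+K+i'*b"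
        using 3 unfolding ftb_back_def by linarith
      ultimately show ?thesis using 3 L by auto
    qed
  qed
qed

lemma aligned_card:
  assumes "P = 3*K+1" "L = P*K + K + N*b" "A1 < K" "A2 < K" "A1 \<noteq> A2" "1 \<le> i'" "i' \<le> N"
  shows "card ({P*K..<P*K+K} - {P*K+A1, P*K+A2} \<union> {P*K+K+(i'-1)*b..<P*K+K+i'*b}) = K - 2 + b"
proof -
  have "card ({P*K..<P*K+K} - {P*K+A1, P*K+A2}) = K - 2"
    using assms by (subst card_Diff_subset) auto
  moreover have "card {P*K+K+(i'-1)*b..<P*K+K+i'*b} = b"
    using assms by (cases i') auto
  ultimately show ?thesis
    by (subst card_Un_disjoint) auto
qed




lemma dm1: "0 < (L::nat) \<Longrightarrow> x mod L + p < L \<Longrightarrow> (x + p) div L = x div L \<and> (x+p) mod L = x mod L + p"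
proof -
  assume a: "0 < L" "x mod L + p < L"
  have e: "x + p = (x mod L + p) + (x div L)*L" by simp
  have "((x mod L + p) + (x div L)*L) div L = x div L + (x mod L + p) div L"
    using a(1) by (simp only: div_mult_self1 neq0_conv)
  moreover have "(x mod L + p) div L = 0" using a(2) by (simp only: div_less)
  moreover have "((x mod L + p) + (x div L)*L) mod L = (x mod L + p) mod L"
    by (simp only: mod_mult_self1)
  moreover have "(x mod L + p) mod L = x mod L + p" using a(2) by (simp only: mod_less)
  ultimately show ?thesis by (simp only: e) simp
qed

lemma dm2: "0 < (L::nat) \<Longrightarrow> p < L \<Longrightarrow> L \<le> x mod L + p \<Longrightarrow>
   (x + p) div L = x div L + 1 \<and> (x+p) mod L = x mod L + p - L"
proof -
  assume a: "0 < L" "p < L" "L \<le> x mod L + p"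
  have lt: "x mod L + p - L < L" using a mod_less_divisor[of L x] by linarith
  have e1: "(x div L + 1)*L = x div L * L + L" by simp
  have e: "x + p = (x mod L + p - L) + (x div L + 1)*L"
    using a(3) e1 div_mult_mod_eq[of x L] by linarith
  have "((x mod L + p - L) + (x div L + 1)*L) div L = (x div L + 1) + (x mod L + p - L) div L"
    using a(1) by (simp only: div_mult_self1 neq0_conv)
  moreover have "(x mod L + p - L) div L = 0" using lt by (simp only: div_less)
  moreover have "((x mod L + p - L) + (x div L + 1)*L) mod L = (x mod L + p - L) mod L"
    by (simp only: mod_mult_self1)
  moreover have "(x mod L + p - L) mod L = x mod L + p - L" using lt by (simp only: mod_less)
  ultimately show ?thesis by (simp only: e) simp
qed

lemma secdiv: "x < n \<Longrightarrow> (p*n + x) div n = (p::nat)"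
proof -
  assume a: "x < n"
  have "(x + p*n) div n = p + x div n" using a by (simp only: div_mult_self1)
  then show ?thesis using a by (simp add: add.commute)
qed

lemma count_list_card: "count_list xs x = card {i. i < length xs \<and> xs ! i = x}"
proof -
  have "count_list xs x = length (filter (\<lambda>y. y = x) xs)" by (induction xs) auto
  then show ?thesis by (simp add: length_filter_conv_card)
qed

lemma number_eq: "1 \<le> x \<Longrightarrow> x \<le> n \<Longrightarrow> number n x = map (\<lambda>t. t = x - 1) [0..<n]"
proof -
  assume a: "1 \<le> x" "x \<le> n"
  have "number n x = replicate (x-1) False @ replicate 1 True @ replicate (n-x) False"
    by (simp add: number_def zeros_def)
  also have "\<dots> = map (\<lambda>q. x - 1 \<le> q \<and> q < x - 1 + 1) [0..<x - 1 + 1 + (n - x)]" by (rule rep_run_nth)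
  also have "x - 1 + 1 + (n - x) = n" using a by simp
  finally show ?thesis by (auto intro!: map_cong)
qed

context
  fixes n k :: nat and es :: "(nat \<times> nat) list" and s :: "bool list"
  assumes sg: "simple_graph n es" and k3: "3 \<le> k" and sol: "is_solution n k es s"
begin

lemma valid_edge: "(r,t) \<in> set es \<Longrightarrow> 1 \<le> r \<and> r < t \<and> t \<le> n"
  using sg by (auto simp: simple_graph_def)

lemma len_s: "length s = LL n k" using sol by (simp add: is_solution_def)

lemma NN3: "3 \<le> NN k"
proof -
  have "{(1,2),(1,3),(2,3)} \<subseteq> AP k" using k3 by (auto simp: AP_def)
  then have "card {(1::nat,2::nat),(1,3),(2,3)} \<le> card (AP k)" by (intro card_mono AP_finite)
  then show ?thesis by (simp add: AP_card)
qed

lemma LL_pos: "0 < LL n k"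
proof -
  have "2 \<le> bb n k" by (simp add: bb_def)
  then have "0 < NN k * bb n k" using NN3 by simp
  then show ?thesis by (simp add: LL_def)
qed

lemma blocks_len: "1 \<le> i \<Longrightarrow> i < j \<Longrightarrow> j \<le> k \<Longrightarrow> \<forall>e\<in>set es. length (block n k i j e) = LL n k"
proof
  fix e assume a: "1 \<le> i" "i < j" "j \<le> k" "e \<in> set es"
  obtain r t where e: "e = (r,t)" by (cases e)
  show "length (block n k i j e) = LL n k"
    using block_len_nth[of i j k r n t] a valid_edge[of r t] e by auto
qed

lemma es_ne: "es \<noteq> []"
proof
  assume "es = []"
  have "close_substring (dd n k) s (choice_string n k es 1 2)" using sol k3 by (simp add: is_solution_def)
  then obtain u w v where "choice_string n k es 1 2 = u @ w @ v" "length w = length s"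
    by (auto simp: close_substring_def)
  then show False using \<open>es = []\<close> LL_pos len_s by (simp add: choice_string_def)
qed

lemma n2: "2 \<le> n"
proof -
  obtain e where "e \<in> set es" using es_ne by (cases es) auto
  then show ?thesis using valid_edge[of "fst e" "snd e"] by auto
qed

lemma X_card: "card {p. p < LL n k \<and> s!p \<noteq> tb (n*k) p} \<le> dd n k"
proof -
  have "close_substring (dd n k) s (template n k)" using sol by (simp add: is_solution_def)
  then obtain u w v where c: "template n k = u @ w @ v" "length w = length s" "hamming w s \<le> dd n k"
    by (auto simp: close_substring_def)
  have "length (template n k) = length u + length w + length v" using c(1) by simp
  then have "length u = 0" "length v = 0" using c len_s template_len[of n k] by linarith+
  then have w: "w = template n k" using c by simp
  have "hamming w s = card {p. p < LL n k \<and> w!p \<noteq> s!p}" using hamming_card[of w s] c len_s by simp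
  also have "{p. p < LL n k \<and> w!p \<noteq> s!p} = {p. p < LL n k \<and> s!p \<noteq> tb (n*k) p}"
    using w template_nth by auto
  finally show ?thesis using c by simp
qed

lemma pair_aligned:
  assumes ij: "1 \<le> i" "i < j" "j \<le> k"
  shows "\<exists>r t. (r,t) \<in> set es \<and>
    card {p. p < LL n k \<and> blkb (n*k) ((i-1)*n+(r-1)) ((j-1)*n+(t-1)) (bb n k) (pair_index k i j) p \<noteq> s!p}
      \<le> dd n k"
proof -
  define L where "L = LL n k"
  define K where "K = n*k"
  define i' where "i' = pair_index k i j"
  define c where "c = choice_string n k es i j"
  have Lpos: "0 < L" using LL_pos by (simp add: L_def)
  have "close_substring (dd n k) s c" using sol ij by (simp add: is_solution_def c_def)
  then obtain u w v where cw: "c = u @ w @ v" "length w = L" "hamming w s \<le> dd n k"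
    using len_s by (auto simp: close_substring_def L_def)
  have bl: "\<forall>e\<in>set es. length (block n k i j e) = L" using blocks_len[OF ij] by (simp add: L_def)
  have lc: "length c = length es * L" unfolding c_def choice_string_def by (rule concat_map_len[OF bl])
  have ulen: "length u + L \<le> length es * L" using cw lc by (metis le_add1 length_append add.assoc)
  have wn: "w!p = block n k i j (es!((length u + p) div L)) ! ((length u + p) mod L)
      \<and> (length u + p) div L < length es" if p: "p < L" for p
  proof -
    have "w!p = c!(length u + p)" using cw p by (simp add: nth_append)
    moreover have "length u + p < length es * L" using ulen p by linarith
    moreover have "(length u + p) div L < length es" using calculation(2)
      by (simp add: Lpos less_mult_imp_div_less)
    ultimately show ?thesis unfolding c_def choice_string_def using concat_map_nth[OF bl] by simp
  qed
  have blk: "block n k i j (es!a) ! q = blkb K ((i-1)*n+(fst (es!a)-1)) ((j-1)*n+(snd (es!a)-1)) (bb n k) i' q"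
    if "a < length es" "q < L" for a q
  proof -
    obtain r t where e: "es!a = (r,t)" by (cases "es!a")
    have "(r,t) \<in> set es" using that e by (metis nth_mem)
    then have "1 \<le> r \<and> r < t \<and> t \<le> n" by (rule valid_edge)
    then show ?thesis using block_len_nth[of i j k r n t] ij that e by (simp add: L_def K_def i'_def)
  qed
  have ham: "hamming w s = card {p. p < L \<and> w!p \<noteq> s!p}" using hamming_card[of w s] cw len_s
    by (simp add: L_def)
  define X where "X = {p. p < L \<and> s!p \<noteq> tb K p}"
  have cX: "card X \<le> dd n k" using X_card by (simp add: X_def L_def K_def)
  have tri: "card {p. p < L \<and> w!p \<noteq> tb K p} \<le> 2 * dd n k"
  proof -
    have "{p. p < L \<and> w!p \<noteq> tb K p} \<subseteq> {p. p < L \<and> w!p \<noteq> s!p} \<union> X" by (auto simp: X_def)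
    then have "card {p. p < L \<and> w!p \<noteq> tb K p} \<le> card ({p. p < L \<and> w!p \<noteq> s!p} \<union> X)"
      by (intro card_mono) (auto simp: X_def)
    also have "\<dots> \<le> card {p. p < L \<and> w!p \<noteq> s!p} + card X" by (rule card_Un_le)
    finally show ?thesis using cw ham cX by linarith
  qed
  define \<delta> where "\<delta> = length u mod L"
  define a where "a = length u div L"
  have da: "length u = a*L + \<delta>" by (simp add: a_def \<delta>_def)
  have dL: "\<delta> < L" using Lpos by (simp add: \<delta>_def)
  show ?thesis
  proof (cases "\<delta> = 0")
    case False
    have "(a+1)*L < length es * L" using ulen da False by simp
    then have a1: "a + 1 < length es" using mult_less_cancel2 by blast
    define A1 where "A1 = (i-1)*n+(fst (es!a)-1)"
    define A2 where "A2 = (j-1)*n+(snd (es!a)-1)"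
    define B1 where "B1 = (i-1)*n+(fst (es!(a+1))-1)"
    define B2 where "B2 = (j-1)*n+(snd (es!(a+1))-1)"
    have hw: "w!p = (if \<delta> + p < L then blkb K A1 A2 (bb n k) i' (\<delta>+p)
                  else blkb K B1 B2 (bb n k) i' (\<delta>+p-L))" if p: "p < L" for p
    proof (cases "\<delta> + p < L")
      case True
      have "(length u + p) div L = a \<and> (length u + p) mod L = \<delta> + p"
        using dm1[OF Lpos, of "length u" p] True by (simp add: a_def \<delta>_def)
      then show ?thesis using wn[OF p] blk[of a "\<delta>+p"] True a1 by (simp add: A1_def A2_def)
    next
      case f: False
      have "(length u + p) div L = a + 1 \<and> (length u + p) mod L = \<delta> + p - L"
        using dm2[OF Lpos p, of "length u"] f by (simp add: a_def \<delta>_def)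
      moreover have "\<delta> + p - L < L" using p dL by linarith
      ultimately show ?thesis using wn[OF p] blk[of "a+1" "\<delta>+p-L"] f a1 by (simp add: B1_def B2_def)
    qed
    have K2: "2*k \<le> K" using n2 by (simp add: K_def)
    have "2*(K-k) < card {p. p < L \<and> w!p \<noteq> tb K p}"
      apply (rule misaligned[where N="NN k" and b="bb n k" and P="3*K+1" and \<delta>=\<delta>
            and Aa=A1 and Ab=A2 and Ba=B1 and Bb=B2 and i'=i'])
      using K2 k3 NN3 False dL hw by (auto simp: bb_def K_def L_def LL_eq)
    then have False using tri by (simp add: dd_def K_def)
    then show ?thesis ..
  next
    case True
    obtain r t where e: "es!a = (r,t)" by (cases "es!a")
    have aa: "a < length es" using wn[of 0] Lpos da True by simp
    have "(r,t) \<in> set es" using aa e by (metis nth_mem)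
    moreover have "w!p = blkb K ((i-1)*n+(r-1)) ((j-1)*n+(t-1)) (bb n k) i' p" if p: "p < L" for p
    proof -
      have "(length u + p) div L = a \<and> (length u + p) mod L = p"
        using dm1[OF Lpos, of "length u" p] True p by (simp add: a_def \<delta>_def)
      then show ?thesis using wn[OF p] blk[of a p] p aa e by simp
    qed
    then have "{p. p < L \<and> w!p \<noteq> s!p} =
       {p. p < L \<and> blkb K ((i-1)*n+(r-1)) ((j-1)*n+(t-1)) (bb n k) i' p \<noteq> s!p}" by auto
    ultimately show ?thesis using ham cw by (auto simp: L_def K_def i'_def)
  qed
qed

lemma sec_lt: "x < n \<Longrightarrow> p < k \<Longrightarrow> p*n + x < n*(k::nat)"
proof -
  assume "x < n" "p < k"
  then have "p*n + x < (p+1)*n" by simp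
  also have "\<dots> \<le> k*n" using \<open>p < k\<close> by (intro mult_le_mono1) simp
  finally show ?thesis by (simp add: mult.commute)
qed

lemma pair_X:
  assumes ij: "1 \<le> i" "i < j" "j \<le> k"
  shows "\<exists>r t. (r,t) \<in> set es \<and> card {p. p < LL n k \<and> s!p \<noteq> tb (n*k) p} = dd n k \<and>
    {p. p < LL n k \<and> s!p \<noteq> tb (n*k) p} \<subseteq>
      ({(3*(n*k)+1)*(n*k)..<(3*(n*k)+1)*(n*k)+n*k} -
          {(3*(n*k)+1)*(n*k)+((i-1)*n+(r-1)), (3*(n*k)+1)*(n*k)+((j-1)*n+(t-1))})
      \<union> {(3*(n*k)+1)*(n*k)+n*k+(pair_index k i j-1)*bb n k..<(3*(n*k)+1)*(n*k)+n*k+pair_index k i j*bb n k}"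
proof -
  define K where "K = n*k"
  define P where "P = 3*K+1"
  define L where "L = LL n k"
  define i' where "i' = pair_index k i j"
  define X where "X = {p. p < L \<and> s!p \<noteq> tb K p}"
  obtain r t where rt: "(r,t) \<in> set es"
    and ct: "card {p. p < L \<and> blkb K ((i-1)*n+(r-1)) ((j-1)*n+(t-1)) (bb n k) i' p \<noteq> s!p} \<le> dd n k"
    using pair_aligned[OF ij] by (auto simp: L_def K_def i'_def)
  define A1 where "A1 = (i-1)*n+(r-1)"
  define A2 where "A2 = (j-1)*n+(t-1)"
  have v: "1 \<le> r" "r < t" "t \<le> n" using valid_edge[OF rt] by auto
  have A1K: "A1 < K" unfolding A1_def K_def by (rule sec_lt) (use v ij in auto)
  have A2K: "A2 < K" unfolding A2_def K_def by (rule sec_lt) (use v ij in auto)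
  have A12: "A1 < A2"
  proof -
    have "A1 < (i-1)*n + n" using v by (simp add: A1_def)
    also have "\<dots> = i*n" using ij by (cases i) auto
    also have "\<dots> \<le> (j-1)*n" using ij by (intro mult_le_mono1) simp
    also have "\<dots> \<le> A2" by (simp add: A2_def)
    finally show ?thesis .
  qed
  have ib: "1 \<le> i'" "i' \<le> NN k" using pair_index_bounds[OF ij] by (auto simp: i'_def)
  have LL': "L = P*K + K + NN k * bb n k" by (simp add: L_def LL_eq P_def K_def)
  define D where "D = {p. p < L \<and> blkb K A1 A2 (bb n k) i' p \<noteq> tb K p}"
  have Deq: "D = ({P*K..<P*K+K} - {P*K+A1, P*K+A2}) \<union> {P*K+K+(i'-1)*bb n k..<P*K+K+i'*bb n k}"
    unfolding D_def by (rule aligned_D[OF P_def LL' A1K A2K ib])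
  have K2: "2*k \<le> K" using n2 by (simp add: K_def)
  have cD0: "card D = K - 2 + bb n k"
    unfolding Deq using aligned_card[OF P_def LL' A1K A2K _ ib] A12 by simp
  have bbK: "bb n k = K - 2*k + 2" by (simp add: bb_def K_def)
  have ddK: "dd n k = K - k" by (simp add: dd_def K_def)
  have cD: "card D = 2 * dd n k" using cD0 bbK ddK K2 k3 by linarith
  have cX: "card X \<le> dd n k" using X_card by (simp add: X_def L_def K_def)
  have "{p. p < L \<and> blkb K A1 A2 (bb n k) i' p \<noteq> s!p} = (D - X) \<union> (X - D)"
    by (auto simp: D_def X_def)
  then have "card ((D - X) \<union> (X - D)) \<le> dd n k" using ct by (simp add: A1_def A2_def)
  then have "X \<subseteq> D \<and> card X = dd n k"
    by (intro xd_lemma) (use cD cX in \<open>auto simp: D_def X_def\<close>)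
  then show ?thesis using rt unfolding Deq
    by (auto simp: X_def L_def K_def P_def A1_def A2_def i'_def)
qed

lemma core:
  shows "count_list (encoding_part n k s) True = k \<and>
    (\<exists>h :: nat \<Rightarrow> nat.
       (\<forall>p \<in> {1..k}. 1 \<le> h p \<and> h p \<le> n \<and>
           enc_section n p (encoding_part n k s) = number n (h p)) \<and>
       inj_on h {1..k} \<and>
       (\<forall>p \<in> {1..k}. \<forall>q \<in> {1..k}. p \<noteq> q \<longrightarrow> adjacent es (h p) (h q)))"
proof -
  define K where "K = n*k"
  define P where "P = 3*K+1"
  define L where "L = LL n k"
  define X where "X = {p. p < L \<and> s!p \<noteq> tb K p}"
  have LL': "L = P*K + K + NN k * bb n k" by (simp add: L_def LL_eq P_def K_def)
  have K2: "2*k \<le> K" using n2 by (simp add: K_def)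
  define Sx where "Sx i j r t = ({P*K..<P*K+K} - {P*K+((i-1)*n+(r-1)), P*K+((j-1)*n+(t-1))})
      \<union> {P*K+K+(pair_index k i j-1)*bb n k..<P*K+K+pair_index k i j*bb n k}" for i j r t
  have PX: "\<exists>r t. (r,t) \<in> set es \<and> card X = dd n k \<and> X \<subseteq> Sx i j r t"
    if "1 \<le> i" "i < j" "j \<le> k" for i j
    using pair_X[OF that] unfolding Sx_def X_def K_def P_def L_def by simp
  have notin: "P*K + A \<notin> X" if "X \<subseteq> Sx i j r t" "A < K"
     "A = (i-1)*n+(r-1) \<or> A = (j-1)*n+(t-1)" for i j r t A
  proof
    assume "P*K + A \<in> X"
    then have "P*K + A \<in> Sx i j r t" using that(1) by blast
    then show False using that(2,3) unfolding Sx_def by auto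
  qed
  have k12: "1 \<le> (1::nat)" "(1::nat) < 2" "2 \<le> k" using k3 by auto
  obtain r0 t0 where X12: "card X = dd n k" "X \<subseteq> Sx 1 2 r0 t0"
    using PX[OF k12] by blast
  have k13: "1 \<le> (1::nat)" "(1::nat) < 3" "3 \<le> k" using k3 by auto
  obtain r1 t1 where X13: "X \<subseteq> Sx 1 3 r1 t1"
    using PX[OF k13] by blast
  have S12: "Sx 1 2 r0 t0 \<subseteq> {P*K..<P*K+K} \<union> {P*K+K..<P*K+K+bb n k}"
    unfolding Sx_def pair_index_12 by auto
  have S13: "Sx 1 3 r1 t1 \<subseteq> {P*K..<P*K+K} \<union> {P*K+K+bb n k..<P*K+K+2*bb n k}"
    unfolding Sx_def pair_index_13[OF k3] by auto
  have XE: "X \<subseteq> {P*K..<P*K+K}"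
  proof
    fix x assume "x \<in> X"
    then have "x \<in> {P*K..<P*K+K} \<union> {P*K+K..<P*K+K+bb n k}"
      "x \<in> {P*K..<P*K+K} \<union> {P*K+K+bb n k..<P*K+K+2*bb n k}" using X12 X13 S12 S13 by blast+
    then show "x \<in> {P*K..<P*K+K}" by auto
  qed
  have cX: "card X = K - k" using X12 by (simp add: dd_def K_def)
  define Y where "Y = {q. q < K \<and> P*K + q \<notin> X}"
  have cY: "card Y = k"
  proof -
    have "(\<lambda>q. P*K + q) ` Y = {P*K..<P*K+K} - X"
    proof
      show "(\<lambda>q. P*K + q) ` Y \<subseteq> {P*K..<P*K+K} - X" by (auto simp: Y_def)
      show "{P*K..<P*K+K} - X \<subseteq> (\<lambda>q. P*K + q) ` Y"
      proof
        fix x assume x: "x \<in> {P*K..<P*K+K} - X"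
        then have "x - P*K \<in> Y" "x = P*K + (x - P*K)" by (auto simp: Y_def)
        then show "x \<in> (\<lambda>q. P*K + q) ` Y" by blast
      qed
    qed
    then have "card Y = card ({P*K..<P*K+K} - X)"
      by (metis card_image inj_on_add)
    also have "\<dots> = K - card X" using XE by (subst card_Diff_subset) (auto intro: finite_subset)
    finally show ?thesis using cX K2 by simp
  qed
  define enc where "enc = encoding_part n k s"
  have encd: "enc = take K (drop (P*K) s)"
    by (simp add: enc_def encoding_part_def K_def P_def algebra_simps)
  have ls: "length s = P*K + K + NN k * bb n k" using len_s LL' by (simp add: L_def)
  have lenc: "length enc = K" using ls by (simp add: encd)
  have encn: "enc!q = (q \<in> Y)" if "q < K" for q
  proof -
    have "enc!q = s!(P*K + q)" using that ls by (simp add: encd)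
    moreover have "tb K (P*K + q)" using that by (simp add: tb_def P_def)
    moreover have "P*K + q < L" using that LL' by simp
    ultimately show ?thesis using that by (auto simp: Y_def X_def)
  qed
  have count: "count_list enc True = k"
  proof -
    have "{i. i < length enc \<and> enc ! i = True} = Y" using lenc encn by (auto simp: Y_def)
    then show ?thesis using cY by (simp add: count_list_card)
  qed
  have npos: "0 < n" using n2 by simp
  have Ysub: "Y \<subseteq> {..<K}" by (auto simp: Y_def)
  have inY: "(p-1)*n + (x-1) \<in> Y" if "1 \<le> p" "p \<le> k" "1 \<le> x" "x \<le> n"
      "P*K + ((p-1)*n + (x-1)) \<notin> X" for p x
  proof -
    have "(p-1)*n + (x-1) < K" unfolding K_def by (rule sec_lt) (use that in auto)
    then show ?thesis using that by (simp add: Y_def)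
  qed
  have ex: "\<exists>x. 1 \<le> x \<and> x \<le> n \<and> (p-1)*n + (x-1) \<in> Y" if p: "p \<in> {1..k}" for p
  proof (cases "p = 1")
    case True
    obtain r t where rt: "(r,t) \<in> set es" "X \<subseteq> Sx 1 2 r t"
      using PX[OF k12] by blast
    have v: "1 \<le> r" "r < t" "t \<le> n" using valid_edge[OF rt(1)] by auto
    have A: "(1-1)*n + (r-1) < K" unfolding K_def by (rule sec_lt) (use v k3 in auto)
    have "P*K + ((1-1)*n + (r-1)) \<notin> X" using notin[OF rt(2) A] by simp
    then have "(1-1)*n + (r-1) \<in> Y" using v inY[of 1 r] k3 by auto
    then show ?thesis using v True by (intro exI[of _ r]) simp
  next
    case False
    then have pk: "1 \<le> (1::nat)" "1 < p" "p \<le> k" using p by auto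
    obtain r t where rt: "(r,t) \<in> set es" "X \<subseteq> Sx 1 p r t"
      using PX[OF pk] by blast
    have v: "1 \<le> r" "r < t" "t \<le> n" using valid_edge[OF rt(1)] by auto
    have A: "(p-1)*n + (t-1) < K" unfolding K_def by (rule sec_lt) (use v pk in auto)
    have "P*K + ((p-1)*n + (t-1)) \<notin> X" using notin[OF rt(2) A] by simp
    then have "(p-1)*n + (t-1) \<in> Y" using v inY[of p t] pk by auto
    then show ?thesis using v by (intro exI[of _ t]) simp
  qed
  have gY: "(\<lambda>q. q div n) ` Y = {..<k}"
  proof
    show "(\<lambda>q. q div n) ` Y \<subseteq> {..<k}"
      using Ysub by (auto simp: K_def less_mult_imp_div_less mult.commute)
    show "{..<k} \<subseteq> (\<lambda>q. q div n) ` Y"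
    proof
      fix p' assume "p' \<in> {..<k}"
      then obtain x where x: "1 \<le> x" "x \<le> n" "(Suc p' - 1)*n + (x-1) \<in> Y" using ex[of "Suc p'"] by auto
      have "x - 1 < n" using x by simp
      then have "(p'*n + (x-1)) div n = p'" by (rule secdiv)
      then have "((Suc p' - 1)*n + (x-1)) div n = p'" by simp
      then show "p' \<in> (\<lambda>q. q div n) ` Y" using x(3) by (rule image_eqI[OF sym])
    qed
  qed
  have injg: "inj_on (\<lambda>q. q div n) Y"
  proof (rule eq_card_imp_inj_on)
    show fY: "finite Y" using Ysub by (rule finite_subset) simp
    show "card ((\<lambda>q. q div n) ` Y) = card Y" unfolding gY cY by simp
  qed
  have uniq: "x1 = x2" if "1 \<le> x1" "x1 \<le> n" "1 \<le> x2" "x2 \<le> n"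
     "(p-1)*n + (x1-1) \<in> Y" "(p-1)*n + (x2-1) \<in> Y" for p x1 x2
  proof -
    have "x1 - 1 < n" "x2 - 1 < n" using that by auto
    then have "((p-1)*n + (x1-1)) div n = ((p-1)*n + (x2-1)) div n" by (simp only: secdiv)
    then have "(p-1)*n + (x1-1) = (p-1)*n + (x2-1)" by (rule inj_onD[OF injg _ that(5) that(6)])
    then show ?thesis using that by simp
  qed
  obtain h where h: "\<forall>p\<in>{1..k}. 1 \<le> h p \<and> h p \<le> n \<and> (p-1)*n + (h p - 1) \<in> Y"
  proof -
    have "\<forall>p\<in>{1..k}. \<exists>x. 1 \<le> x \<and> x \<le> n \<and> (p-1)*n + (x-1) \<in> Y" using ex by (rule ballI)
    then have "\<exists>h. \<forall>p\<in>{1..k}. 1 \<le> h p \<and> h p \<le> n \<and> (p-1)*n + (h p - 1) \<in> Y" by (rule bchoice)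
    then show ?thesis using that by (elim exE)
  qed
  have sec: "enc_section n p enc = number n (h p)" if p: "p \<in> {1..k}" for p
  proof -
    have hp: "1 \<le> h p" "h p \<le> n" "(p-1)*n + (h p - 1) \<in> Y" using bspec[OF h p] by blast+
    have pn: "(p-1)*n + n \<le> K"
    proof -
      have "(p-1)*n + n = p*n" using p by (cases p) auto
      also have "\<dots> \<le> k*n" using p by (intro mult_le_mono1) simp
      finally show ?thesis by (simp add: K_def mult.commute)
    qed
    show ?thesis unfolding number_eq[OF hp(1,2)] enc_section_def
    proof (rule nth_equalityI)
      show "length (take n (drop ((p - 1) * n) enc)) = length (map (\<lambda>t. t = h p - 1) [0..<n])"
        using lenc pn by simp
      fix t assume "t < length (take n (drop ((p - 1) * n) enc))"
      then have t: "t < n" using lenc pn by simp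
      have "take n (drop ((p - 1) * n) enc) ! t = enc!((p-1)*n + t)" using t lenc pn by simp
      also have "\<dots> = ((p-1)*n + t \<in> Y)" using pn t by (intro encn) simp
      also have "\<dots> = (t = h p - 1)"
      proof
        assume "(p-1)*n + t \<in> Y"
        then have m: "(p-1)*n + (t + 1 - 1) \<in> Y" by simp
        have "t + 1 = h p" by (rule uniq[of "t+1" "h p" p, OF _ _ hp(1) hp(2) m hp(3)]) (use t in simp_all)
        then show "t = h p - 1" by simp
      next
        assume "t = h p - 1" then show "(p-1)*n + t \<in> Y" using hp by simp
      qed
      also have "\<dots> = map (\<lambda>t. t = h p - 1) [0..<n] ! t" using t by simp
      finally show "take n (drop ((p - 1) * n) enc) ! t = map (\<lambda>t. t = h p - 1) [0..<n] ! t" .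
    qed
  qed
  have edge: "(h p, h q) \<in> set es" if "p \<in> {1..k}" "q \<in> {1..k}" "p < q" for p q
  proof -
    have pq: "1 \<le> p" "p < q" "q \<le> k" using that by auto
    obtain r t where rt: "(r,t) \<in> set es" "X \<subseteq> Sx p q r t"
      using PX[OF pq] by blast
    have v: "1 \<le> r" "r < t" "t \<le> n" using valid_edge[OF rt(1)] by auto
    have A1: "(p-1)*n + (r-1) < K" unfolding K_def by (rule sec_lt) (use v pq in auto)
    have A2: "(q-1)*n + (t-1) < K" unfolding K_def by (rule sec_lt) (use v pq in auto)
    have yp: "(p-1)*n + (r-1) \<in> Y" using inY[of p r] notin[OF rt(2) A1] v pq by auto
    have yq: "(q-1)*n + (t-1) \<in> Y" using inY[of q t] notin[OF rt(2) A2] v pq by auto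
    have hp: "1 \<le> h p" "h p \<le> n" "(p-1)*n + (h p - 1) \<in> Y" using bspec[OF h that(1)] by blast+
    have hq: "1 \<le> h q" "h q \<le> n" "(q-1)*n + (h q - 1) \<in> Y" using bspec[OF h that(2)] by blast+
    have "h p = r" by (rule uniq[of "h p" r p, OF hp(1) hp(2) _ _ hp(3) yp]) (use v in linarith)+
    moreover have "h q = t" by (rule uniq[of "h q" t q, OF hq(1) hq(2) _ _ hq(3) yq]) (use v in linarith)+
    ultimately show ?thesis using rt(1) by simp
  qed
  have adj: "adjacent es (h p) (h q)" if "p \<in> {1..k}" "q \<in> {1..k}" "p \<noteq> q" for p q
  proof (cases "p < q")
    case True then show ?thesis using edge[of p q] that by (simp add: adjacent_def)
  next
    case False then have "q < p" using that by simp
    then show ?thesis using edge[of q p] that by (simp add: adjacent_def)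
  qed
  have inj: "inj_on h {1..k}"
  proof (rule inj_onI, rule ccontr)
    fix p q assume a: "p \<in> {1..k}" "q \<in> {1..k}" "h p = h q" "p \<noteq> q"
    then have "(h p, h p) \<in> set es" using adj[of p q] by (auto simp: adjacent_def)
    then show False using valid_edge by blast
  qed
  show ?thesis using count sec h inj adj unfolding enc_def by blast
qed

end

theorem proposition4:
  fixes n k :: nat and es :: "(nat \<times> nat) list" and s :: "bool list"
  assumes "simple_graph n es"
    and "k \<ge> 3"
    and "is_solution n k es s"
  shows "count_list (encoding_part n k s) True = k \<and>
    (\<exists>h :: nat \<Rightarrow> nat.
       (\<forall>p \<in> {1..k}. 1 \<le> h p \<and> h p \<le> n \<and>
           enc_section n p (encoding_part n k s) = number n (h p)) \<and>
       inj_on h {1..k} \<and>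
       (\<forall>p \<in> {1..k}. \<forall>q \<in> {1..k}. p \<noteq> q \<longrightarrow> adjacent es (h p) (h q)))"
  using core[OF assms] .

end
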